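(* For every $k\in\mathbb{N}$, $\mathcal{L}^{(k)}_0$ is a functional Banach space on $T$ containing $\mathcal{P}$ and satisfying: (a) $\mathcal{P}$ is dense in $\mathcal{L}^{(k)}_0$; (b) for each $v\in T$ and each $f\in\mathcal{L}^{(k)}_0$, $p_vf\in\mathcal{L}^{(k)}_0$.
   Context: $T$ is a tree (locally finite, connected, simply connected graph, identified with its vertex set) without terminal vertices, rooted at $o$. $|v|$ is the distance from $o$ to $v$; for $v\ne o$, $v^-$ is the parent of $v$. $T^*=T\setminus\{o\}$, $Df(v)=|f(v)-f(v^-)|$. For $x\ge1$: $\ell_0(x)=1$, $\ell_1(x)=1+\ln x$, $\ell_j(x)=1+\ln\ell_{j-1}(x)$ for $j\ge2$. $\mathcal{L}^{(k)}$ is the space of $f:T\to\mathbb{C}$ with $\sup_{v\in T^*}|v|\prod_{j=0}^{k-1}\ell_j(|v|)Df(v)<\infty$, normed by $\|f\|_k=|f(o)|+\sup_{v\in T^*}|v|\prod_{j=0}^{k-1}\ell_j(|v|)Df(v)$; $\mathcal{L}^{(k)}_0$ is its subspace of $f$ with $\lim_{|v|\to\infty}|v|\prod_{j=0}^{k-1}\ell_j(|v|)Df(v)=0$. A functional Banach space on $T$ is a Banach space of complex functions on $T$ on which every point evaluation $f\mapsto f(v)$ is bounded. For $v\in T$, $S_v$ is the set of $v$ and all its descendants, $p_v=\chi_{S_v}$, and $\mathcal{P}$ is the set of all finite linear combinations $\sum_{i=1}^N a_ip_{v_i}$ with $a_i\in\mathbb{C}$, $v_i\in T$. *)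

theory Defs
  imports Complex_Main
begin

text \<open>A rooted tree on the vertex type 'v (vertex set = UNIV), given by its root r and
  the parent map par (par r is irrelevant).  Edges are the pairs {w, par w}, w \<noteq> r.
  Conditions: connected and simply connected (every vertex reaches the root by iterating
  the parent map), locally finite (finitely many children), no terminal vertices
  (every non-root vertex has a child; the root has at least two children).\<close>

definition children :: "'v \<Rightarrow> ('v \<Rightarrow> 'v) \<Rightarrow> 'v \<Rightarrow> 'v set" where
  "children r par v = {w. w \<noteq> r \<and> par w = v}"

definition rooted_tree :: "'v \<Rightarrow> ('v \<Rightarrow> 'v) \<Rightarrow> bool" where
  "rooted_tree r par \<longleftrightarrow>
     (\<forall>v. \<exists>n. (par ^^ n) v = r) \<and>
     (\<forall>v. finite (children r par v)) \<and>
     (\<forall>v. v \<noteq> r \<longrightarrow> children r par v \<noteq> {}) \<and>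
     2 \<le> card (children r par r)"

definition vlen :: "'v \<Rightarrow> ('v \<Rightarrow> 'v) \<Rightarrow> 'v \<Rightarrow> nat" where
  "vlen r par v = (LEAST n. (par ^^ n) v = r)"

definition sector :: "'v \<Rightarrow> ('v \<Rightarrow> 'v) \<Rightarrow> 'v \<Rightarrow> 'v set" where
  "sector r par v = {w. \<exists>n \<le> vlen r par w. (par ^^ n) w = v}"

definition pfun :: "'v \<Rightarrow> ('v \<Rightarrow> 'v) \<Rightarrow> 'v \<Rightarrow> 'v \<Rightarrow> complex" where
  "pfun r par v = (\<lambda>w. if w \<in> sector r par v then 1 else 0)"

definition Pspace :: "'v \<Rightarrow> ('v \<Rightarrow> 'v) \<Rightarrow> ('v \<Rightarrow> complex) set" where
  "Pspace r par = {f. \<exists>(N::nat) (a::nat \<Rightarrow> complex) (vs::nat \<Rightarrow> 'v).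
                        f = (\<lambda>w. \<Sum>i<N. a i * pfun r par (vs i) w)}"

fun ell :: "nat \<Rightarrow> real \<Rightarrow> real" where
  "ell 0 x = 1"
| "ell (Suc 0) x = 1 + ln x"
| "ell (Suc (Suc j)) x = 1 + ln (ell (Suc j) x)"

definition weight :: "nat \<Rightarrow> nat \<Rightarrow> real" where
  "weight k n = real n * (\<Prod>j<k. ell j (real n))"

definition Df :: "'v \<Rightarrow> ('v \<Rightarrow> 'v) \<Rightarrow> ('v \<Rightarrow> complex) \<Rightarrow> 'v \<Rightarrow> real" where
  "Df r par f v = cmod (f v - f (par v))"

definition wDf :: "nat \<Rightarrow> 'v \<Rightarrow> ('v \<Rightarrow> 'v) \<Rightarrow> ('v \<Rightarrow> complex) \<Rightarrow> 'v \<Rightarrow> real" where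
  "wDf k r par f v = weight k (vlen r par v) * Df r par f v"

definition Lk :: "nat \<Rightarrow> 'v \<Rightarrow> ('v \<Rightarrow> 'v) \<Rightarrow> ('v \<Rightarrow> complex) set" where
  "Lk k r par = {f. \<exists>C. \<forall>v. v \<noteq> r \<longrightarrow> wDf k r par f v \<le> C}"

definition normk :: "nat \<Rightarrow> 'v \<Rightarrow> ('v \<Rightarrow> 'v) \<Rightarrow> ('v \<Rightarrow> complex) \<Rightarrow> real" where
  "normk k r par f = cmod (f r) + (SUP v\<in>{v. v \<noteq> r}. wDf k r par f v)"

definition L0k :: "nat \<Rightarrow> 'v \<Rightarrow> ('v \<Rightarrow> 'v) \<Rightarrow> ('v \<Rightarrow> complex) set" where
  "L0k k r par = {f \<in> Lk k r par.
      \<forall>\<epsilon>>0. \<exists>N. \<forall>v. v \<noteq> r \<and> N \<le> vlen r par v \<longrightarrow> wDf k r par f v < \<epsilon>}"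

definition functional_banach :: "('v \<Rightarrow> complex) set \<Rightarrow> (('v \<Rightarrow> complex) \<Rightarrow> real) \<Rightarrow> bool" where
  "functional_banach X N \<longleftrightarrow>
     (\<lambda>_. 0) \<in> X \<and>
     (\<forall>f\<in>X. \<forall>g\<in>X. (\<lambda>w. f w + g w) \<in> X) \<and>
     (\<forall>c. \<forall>f\<in>X. (\<lambda>w. c * f w) \<in> X) \<and>
     (\<forall>f\<in>X. 0 \<le> N f) \<and>
     (\<forall>f\<in>X. N f = 0 \<longleftrightarrow> f = (\<lambda>_. 0)) \<and>
     (\<forall>c. \<forall>f\<in>X. N (\<lambda>w. c * f w) = cmod c * N f) \<and>
     (\<forall>f\<in>X. \<forall>g\<in>X. N (\<lambda>w. f w + g w) \<le> N f + N g) \<and>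
     (\<forall>s. (\<forall>n. s n \<in> X) \<longrightarrow>
          (\<forall>\<epsilon>>0. \<exists>M. \<forall>m\<ge>M. \<forall>n\<ge>M. N (\<lambda>w. s m w - s n w) < \<epsilon>) \<longrightarrow>
          (\<exists>g\<in>X. (\<lambda>n. N (\<lambda>w. s n w - g w)) \<longlonglongrightarrow> 0)) \<and>
     (\<forall>v. \<exists>C. \<forall>f\<in>X. cmod (f v) \<le> C * N f)"

end

theory Submission
  imports Defs
begin


lemma ell_ge1: "x \<ge> 1 \<Longrightarrow> ell j x \<ge> 1"
  by (induction j x rule: ell.induct) auto

lemma weight_ge1: "n \<ge> 1 \<Longrightarrow> weight k n \<ge> 1"
proof -
  assume n: "n \<ge> 1"
  have "(\<Prod>j<k. ell j (real n)) \<ge> 1" using n by (intro prod_ge_1) (auto intro: ell_ge1)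
  moreover have "real n \<ge> 1" using n by simp
  ultimately have "1 * 1 \<le> real n * (\<Prod>j<k. ell j (real n))" by (intro mult_mono) auto
  then show ?thesis by (simp add: weight_def)
qed

lemma weight_nonneg: "weight k n \<ge> 0"
proof (cases "n = 0")
  case True then show ?thesis by (simp add: weight_def)
next
  case False then have "weight k n \<ge> 1" by (intro weight_ge1) auto
  then show ?thesis by simp
qed

locale rtree =
  fixes r :: 'v and par :: "'v \<Rightarrow> 'v" and k :: nat
  assumes T: "rooted_tree r par"
begin

lemma reach: "\<exists>n. (par ^^ n) v = r" using T unfolding rooted_tree_def by blast

lemma vlen_reach: "(par ^^ vlen r par v) v = r"
  unfolding vlen_def by (rule LeastI_ex[OF reach])

lemma vlen_r[simp]: "vlen r par r = 0"
  unfolding vlen_def by (rule Least_equality) auto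

lemma vlen_pos: "v \<noteq> r \<Longrightarrow> vlen r par v > 0"
  using vlen_reach[of v] by (cases "vlen r par v") auto

lemma vlen_par: "v \<noteq> r \<Longrightarrow> vlen r par v = Suc (vlen r par (par v))"
proof -
  assume v: "v \<noteq> r"
  obtain m where m: "vlen r par v = Suc m" using vlen_pos[OF v] by (cases "vlen r par v") auto
  have 1: "(par^^m) (par v) = r" using vlen_reach[of v] m
    by (simp add: funpow_Suc_right del: funpow.simps)
  have "vlen r par (par v) = m"
    unfolding vlen_def
  proof (rule Least_equality)
    show "(par^^m)(par v) = r" by fact
    fix y assume "(par^^y)(par v) = r"
    then have "(par^^Suc y) v = r" by (simp add: funpow_Suc_right del: funpow.simps)
    then have "vlen r par v \<le> Suc y" unfolding vlen_def by (rule Least_le)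
    then show "m \<le> y" using m by simp
  qed
  then show ?thesis using m by simp
qed

lemma vlen_iter: "n \<le> vlen r par x \<Longrightarrow> vlen r par ((par^^n) x) = vlen r par x - n"
proof (induction n)
  case 0 then show ?case by simp
next
  case (Suc n)
  then have ih: "vlen r par ((par^^n) x) = vlen r par x - n" by simp
  have pos: "0 < vlen r par ((par^^n) x)" using ih Suc.prems by simp
  have "(par^^n) x \<noteq> r"
  proof
    assume "(par^^n) x = r"
    then have "vlen r par ((par^^n) x) = 0" by simp
    with pos show False by simp
  qed
  from vlen_par[OF this] ih show ?case by simp
qed

lemma sector_le: "w \<in> sector r par v \<Longrightarrow> vlen r par v \<le> vlen r par w"
  unfolding sector_def using vlen_iter by auto

lemma r_sector: "r \<in> sector r par v \<longleftrightarrow> v = r"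
  by (auto simp: sector_def)

lemma sector_step: "w \<noteq> r \<Longrightarrow> (w \<in> sector r par v \<longleftrightarrow> w = v \<or> par w \<in> sector r par v)"
proof -
  assume w: "w \<noteq> r"
  have vw: "vlen r par w = Suc (vlen r par (par w))" using vlen_par[OF w] .
  show ?thesis
  proof
    assume "w \<in> sector r par v"
    then obtain n where n: "n \<le> vlen r par w" "(par^^n) w = v" by (auto simp: sector_def)
    show "w = v \<or> par w \<in> sector r par v"
    proof (cases n)
      case 0 then show ?thesis using n by simp
    next
      case (Suc j)
      then have "(par^^j) (par w) = v" "j \<le> vlen r par (par w)" using n vw
        by (simp_all add: funpow_Suc_right del: funpow.simps)
      then show ?thesis by (auto simp: sector_def)
    qed
  next
    assume "w = v \<or> par w \<in> sector r par v"
    then show "w \<in> sector r par v"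
    proof
      assume "w = v" then show ?thesis by (auto simp: sector_def intro: exI[of _ 0])
    next
      assume "par w \<in> sector r par v"
      then obtain j where j: "j \<le> vlen r par (par w)" "(par^^j) (par w) = v" by (auto simp: sector_def)
      then have "(par^^Suc j) w = v" "Suc j \<le> vlen r par w" using vw
        by (simp_all add: funpow_Suc_right del: funpow.simps)
      then show ?thesis unfolding sector_def by blast
    qed
  qed
qed

lemma pfun_diff: "w \<noteq> r \<Longrightarrow> pfun r par v w - pfun r par v (par w) = (if w = v then 1 else 0)"
proof (cases "w = v")
  case True
  assume w: "w \<noteq> r"
  have "w \<in> sector r par v" using True by (auto simp: sector_def intro: exI[of _ 0])
  moreover have "par w \<notin> sector r par v"
  proof
    assume "par w \<in> sector r par v"
    then have "vlen r par v \<le> vlen r par (par w)" by (rule sector_le)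
    with vlen_par[OF w] True show False by simp
  qed
  ultimately show ?thesis using True by (simp add: pfun_def)
next
  case False
  assume w: "w \<noteq> r"
  then show ?thesis using sector_step[OF w, of v] False by (auto simp: pfun_def)
qed

lemma pfun_r: "pfun r par v r = (if v = r then 1 else 0)"
  by (simp add: pfun_def r_sector)

lemma finite_level: "finite {w. vlen r par w \<le> N}"
proof (induction N)
  case 0
  have "{w. vlen r par w \<le> 0} \<subseteq> {r}" using vlen_pos by force
  then show ?case by (rule finite_subset) auto
next
  case (Suc N)
  have "{w. vlen r par w \<le> Suc N} \<subseteq> {w. vlen r par w \<le> N} \<union> (\<Union>u\<in>{w. vlen r par w \<le> N}. children r par u)"
  proof
    fix w assume "w \<in> {w. vlen r par w \<le> Suc N}"
    then have w: "vlen r par w \<le> Suc N" by simp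
    show "w \<in> {w. vlen r par w \<le> N} \<union> (\<Union>u\<in>{w. vlen r par w \<le> N}. children r par u)"
    proof (cases "vlen r par w \<le> N")
      case True then show ?thesis by simp
    next
      case False
      then have "w \<noteq> r" by auto
      then have "vlen r par (par w) \<le> N" "w \<in> children r par (par w)"
        using vlen_par[of w] w by (auto simp: children_def)
      then show ?thesis by blast
    qed
  qed
  moreover have "finite (\<Union>u\<in>{w. vlen r par w \<le> N}. children r par u)"
    using Suc.IH T by (auto simp: rooted_tree_def)
  ultimately show ?case using Suc.IH by (meson finite_UnI finite_subset)
qed

lemma nonempty: "\<exists>v. v \<noteq> r"
proof -
  have "children r par r \<noteq> {}" using T by (auto simp: rooted_tree_def)
  then show ?thesis by (auto simp: children_def)
qed

end

context rtree
begin

abbreviation S :: "('v \<Rightarrow> complex) \<Rightarrow> real" where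
  "S f \<equiv> (SUP v\<in>{v. v \<noteq> r}. wDf k r par f v)"

lemma normk_eq: "normk k r par f = cmod (f r) + S f"
  by (simp add: normk_def)

lemma wDf_nonneg: "0 \<le> wDf k r par f v"
  unfolding wDf_def Df_def by (intro mult_nonneg_nonneg weight_nonneg norm_ge_zero)

lemma Df_le_wDf: "v \<noteq> r \<Longrightarrow> Df r par f v \<le> wDf k r par f v"
proof -
  assume v: "v \<noteq> r"
  have "weight k (vlen r par v) \<ge> 1" using vlen_pos[OF v] by (intro weight_ge1) auto
  then have "1 * Df r par f v \<le> weight k (vlen r par v) * Df r par f v"
    by (intro mult_right_mono) (auto simp: Df_def)
  then show ?thesis by (simp add: wDf_def)
qed

lemma wDf_add: "wDf k r par (\<lambda>w. f w + g w) v \<le> wDf k r par f v + wDf k r par g v"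
proof -
  have "cmod (f v + g v - (f (par v) + g (par v))) \<le> cmod (f v - f (par v)) + cmod (g v - g (par v))"
    by (metis add_diff_add norm_triangle_ineq)
  then have "weight k (vlen r par v) * cmod (f v + g v - (f (par v) + g (par v)))
     \<le> weight k (vlen r par v) * (cmod (f v - f (par v)) + cmod (g v - g (par v)))"
    by (intro mult_left_mono weight_nonneg)
  then show ?thesis by (simp add: wDf_def Df_def algebra_simps)
qed

lemma wDf_diff: "wDf k r par (\<lambda>w. f w - g w) v \<le> wDf k r par f v + wDf k r par g v"
proof -
  have "cmod (f v - g v - (f (par v) - g (par v))) \<le> cmod (f v - f (par v)) + cmod (g v - g (par v))"
    by (metis diff_diff_eq2 diff_add_eq add_diff_eq norm_triangle_ineq4 diff_diff_add
        add.commute diff_add_cancel diff_diff_eq)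
  then have "weight k (vlen r par v) * cmod (f v - g v - (f (par v) - g (par v)))
     \<le> weight k (vlen r par v) * (cmod (f v - f (par v)) + cmod (g v - g (par v)))"
    by (intro mult_left_mono weight_nonneg)
  then show ?thesis by (simp add: wDf_def Df_def algebra_simps)
qed

lemma wDf_scale: "wDf k r par (\<lambda>w. c * f w) v = cmod c * wDf k r par f v"
proof -
  have "c * f v - c * f (par v) = c * (f v - f (par v))" by (simp add: algebra_simps)
  then show ?thesis by (simp add: wDf_def Df_def norm_mult)
qed

lemma S_upper: "f \<in> Lk k r par \<Longrightarrow> v \<noteq> r \<Longrightarrow> wDf k r par f v \<le> S f"
proof -
  assume f: "f \<in> Lk k r par" and v: "v \<noteq> r"
  then obtain C where C: "\<forall>v. v \<noteq> r \<longrightarrow> wDf k r par f v \<le> C" by (auto simp: Lk_def)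
  have "bdd_above ((\<lambda>v. wDf k r par f v) ` {v. v \<noteq> r})" using C by (auto intro: bdd_aboveI2)
  then show ?thesis using v by (intro cSUP_upper) auto
qed

lemma S_least: "(\<And>v. v \<noteq> r \<Longrightarrow> wDf k r par f v \<le> C) \<Longrightarrow> S f \<le> C"
  using nonempty by (intro cSUP_least) auto

lemma S_nonneg: "f \<in> Lk k r par \<Longrightarrow> 0 \<le> S f"
proof -
  assume f: "f \<in> Lk k r par"
  obtain v where "v \<noteq> r" using nonempty by blast
  then show ?thesis using S_upper[OF f] wDf_nonneg[of f v] by force
qed

lemma normk_nonneg: "f \<in> Lk k r par \<Longrightarrow> 0 \<le> normk k r par f"
  using S_nonneg by (simp add: normk_eq add_nonneg_nonneg)

lemma Lk_add: "f \<in> Lk k r par \<Longrightarrow> g \<in> Lk k r par \<Longrightarrow> (\<lambda>w. f w + g w) \<in> Lk k r par"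
proof -
  assume "f \<in> Lk k r par" "g \<in> Lk k r par"
  then obtain C D where C: "\<forall>v. v \<noteq> r \<longrightarrow> wDf k r par f v \<le> C"
     and D: "\<forall>v. v \<noteq> r \<longrightarrow> wDf k r par g v \<le> D" by (auto simp: Lk_def)
  have "\<forall>v. v \<noteq> r \<longrightarrow> wDf k r par (\<lambda>w. f w + g w) v \<le> C + D"
    using C D wDf_add by (meson add_mono order_trans)
  then show ?thesis by (auto simp: Lk_def)
qed

lemma Lk_diff: "f \<in> Lk k r par \<Longrightarrow> g \<in> Lk k r par \<Longrightarrow> (\<lambda>w. f w - g w) \<in> Lk k r par"
proof -
  assume "f \<in> Lk k r par" "g \<in> Lk k r par"
  then obtain C D where C: "\<forall>v. v \<noteq> r \<longrightarrow> wDf k r par f v \<le> C"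
     and D: "\<forall>v. v \<noteq> r \<longrightarrow> wDf k r par g v \<le> D" by (auto simp: Lk_def)
  have "\<forall>v. v \<noteq> r \<longrightarrow> wDf k r par (\<lambda>w. f w - g w) v \<le> C + D"
    using C D wDf_diff by (meson add_mono order_trans)
  then show ?thesis by (auto simp: Lk_def)
qed

lemma L0k_tail: "f \<in> L0k k r par \<Longrightarrow> e > 0 \<Longrightarrow> \<exists>N. \<forall>v. v \<noteq> r \<and> N \<le> vlen r par v \<longrightarrow> wDf k r par f v < e"
  by (auto simp: L0k_def)

lemma L0k_add: "f \<in> L0k k r par \<Longrightarrow> g \<in> L0k k r par \<Longrightarrow> (\<lambda>w. f w + g w) \<in> L0k k r par"
proof -
  assume f: "f \<in> L0k k r par" and g: "g \<in> L0k k r par"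
  have "\<exists>N. \<forall>v. v \<noteq> r \<and> N \<le> vlen r par v \<longrightarrow> wDf k r par (\<lambda>w. f w + g w) v < e" if e: "e > 0" for e
  proof -
    obtain N1 where N1: "\<forall>v. v \<noteq> r \<and> N1 \<le> vlen r par v \<longrightarrow> wDf k r par f v < e/2"
      using L0k_tail[OF f, of "e/2"] e by auto
    obtain N2 where N2: "\<forall>v. v \<noteq> r \<and> N2 \<le> vlen r par v \<longrightarrow> wDf k r par g v < e/2"
      using L0k_tail[OF g, of "e/2"] e by auto
    show ?thesis
    proof (intro exI[of _ "max N1 N2"] allI impI)
      fix v assume "v \<noteq> r \<and> max N1 N2 \<le> vlen r par v"
      then have "wDf k r par f v < e/2" "wDf k r par g v < e/2" using N1 N2 by auto
      then show "wDf k r par (\<lambda>w. f w + g w) v < e" using wDf_add[of f g v] by linarith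
    qed
  qed
  then show ?thesis using f g Lk_add by (auto simp: L0k_def)
qed

lemma L0k_diff: "f \<in> L0k k r par \<Longrightarrow> g \<in> L0k k r par \<Longrightarrow> (\<lambda>w. f w - g w) \<in> L0k k r par"
proof -
  assume f: "f \<in> L0k k r par" and g: "g \<in> L0k k r par"
  have "\<exists>N. \<forall>v. v \<noteq> r \<and> N \<le> vlen r par v \<longrightarrow> wDf k r par (\<lambda>w. f w - g w) v < e" if e: "e > 0" for e
  proof -
    obtain N1 where N1: "\<forall>v. v \<noteq> r \<and> N1 \<le> vlen r par v \<longrightarrow> wDf k r par f v < e/2"
      using L0k_tail[OF f, of "e/2"] e by auto
    obtain N2 where N2: "\<forall>v. v \<noteq> r \<and> N2 \<le> vlen r par v \<longrightarrow> wDf k r par g v < e/2"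
      using L0k_tail[OF g, of "e/2"] e by auto
    show ?thesis
    proof (intro exI[of _ "max N1 N2"] allI impI)
      fix v assume "v \<noteq> r \<and> max N1 N2 \<le> vlen r par v"
      then have "wDf k r par f v < e/2" "wDf k r par g v < e/2" using N1 N2 by auto
      then show "wDf k r par (\<lambda>w. f w - g w) v < e" using wDf_diff[of f g v] by linarith
    qed
  qed
  then show ?thesis using f g Lk_diff by (auto simp: L0k_def)
qed

lemma L0k_scale: "f \<in> L0k k r par \<Longrightarrow> (\<lambda>w. c * f w) \<in> L0k k r par"
proof -
  assume f: "f \<in> L0k k r par"
  have "\<exists>N. \<forall>v. v \<noteq> r \<and> N \<le> vlen r par v \<longrightarrow> wDf k r par (\<lambda>w. c * f w) v < e" if e: "e > 0" for e
  proof -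
    have cp: "cmod c + 1 > 0" using norm_ge_zero[of c] by linarith
    have "e / (cmod c + 1) > 0" using e cp by (rule divide_pos_pos)
    then obtain N1 where N1: "\<forall>v. v \<noteq> r \<and> N1 \<le> vlen r par v \<longrightarrow> wDf k r par f v < e / (cmod c + 1)"
      using f by (auto simp: L0k_def)
    have "wDf k r par (\<lambda>w. c * f w) v < e" if "v \<noteq> r" "N1 \<le> vlen r par v" for v
    proof -
      have a: "wDf k r par f v < e / (cmod c + 1)" using N1 that by blast
      have "cmod c * wDf k r par f v \<le> (cmod c + 1) * wDf k r par f v"
        using wDf_nonneg[of f v] by (simp add: algebra_simps)
      also have "\<dots> < (cmod c + 1) * (e / (cmod c + 1))"
        using a cp by (intro mult_strict_left_mono) auto
      also have "\<dots> = e" using cp by simp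
      finally show ?thesis by (simp add: wDf_scale)
    qed
    then show ?thesis by blast
  qed
  moreover have "(\<lambda>w. c * f w) \<in> Lk k r par"
  proof -
    obtain C where C: "\<forall>v. v \<noteq> r \<longrightarrow> wDf k r par f v \<le> C" using f by (auto simp: L0k_def Lk_def)
    have "\<forall>v. v \<noteq> r \<longrightarrow> wDf k r par (\<lambda>w. c * f w) v \<le> cmod c * C"
      using C by (simp add: wDf_scale mult_left_mono)
    then show ?thesis by (auto simp: Lk_def)
  qed
  ultimately show ?thesis by (auto simp: L0k_def)
qed

lemma L0k_zero: "(\<lambda>_. 0) \<in> L0k k r par"
  by (auto simp: L0k_def Lk_def wDf_def Df_def)

lemma eval_bound: "f \<in> Lk k r par \<Longrightarrow> cmod (f v) \<le> cmod (f r) + real (vlen r par v) * S f"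
proof (induction "vlen r par v" arbitrary: v)
  case 0
  then have "v = r" using vlen_pos by (metis less_irrefl)
  then show ?case by simp
next
  case (Suc n v)
  from Suc.hyps(2) have hv: "Suc n = vlen r par v" .
  then have v: "v \<noteq> r" by (metis vlen_r nat.distinct(1))
  then have n: "n = vlen r par (par v)" using vlen_par hv by simp
  have ih: "cmod (f (par v)) \<le> cmod (f r) + real n * S f" using Suc.hyps(1)[OF n Suc.prems] n by simp
  have "cmod (f v) \<le> cmod (f (par v)) + Df r par f v"
    unfolding Df_def by (metis add.commute diff_add_cancel norm_triangle_ineq)
  also have "\<dots> \<le> cmod (f (par v)) + S f" using Df_le_wDf[OF v, of f] S_upper[OF Suc.prems v] by simp
  finally show ?case using ih hv[symmetric] by (simp add: algebra_simps)
qed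

lemma eval_bound2: "f \<in> Lk k r par \<Longrightarrow> cmod (f v) \<le> (1 + real (vlen r par v)) * normk k r par f"
proof -
  assume f: "f \<in> Lk k r par"
  have "cmod (f v) \<le> cmod (f r) + real (vlen r par v) * S f" by (rule eval_bound[OF f])
  also have "\<dots> \<le> (1 + real (vlen r par v)) * (cmod (f r) + S f)"
  proof -
    have eq: "(1 + real (vlen r par v)) * (cmod (f r) + S f) = cmod (f r) + real (vlen r par v) * S f + (S f + real (vlen r par v) * cmod (f r))"
      by (simp add: algebra_simps)
    have "0 \<le> real (vlen r par v) * cmod (f r)" by simp
    then show ?thesis using eq S_nonneg[OF f] by linarith
  qed
  finally show ?thesis by (simp add: normk_eq)
qed

lemma norm_zero: "f \<in> Lk k r par \<Longrightarrow> normk k r par f = 0 \<Longrightarrow> f = (\<lambda>_. 0)"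
proof
  fix v assume f: "f \<in> Lk k r par" and "normk k r par f = 0"
  then show "f v = 0" using eval_bound2[OF f, of v] by simp
qed

end

lemma P_zero: "(\<lambda>_. 0) \<in> Pspace r par"
  unfolding Pspace_def by (rule CollectI, rule exI[of _ 0]) simp

lemma P_add1: "f \<in> Pspace r par \<Longrightarrow> (\<lambda>w. f w + c * pfun r par u w) \<in> Pspace r par"
proof -
  assume "f \<in> Pspace r par"
  then obtain N :: nat and a :: "nat \<Rightarrow> complex" and vs where f: "f = (\<lambda>w. \<Sum>i<N. a i * pfun r par (vs i) w)"
    unfolding Pspace_def mem_Collect_eq by (elim exE) (rule that)
  have "(\<lambda>w. f w + c * pfun r par u w) = (\<lambda>w. \<Sum>i<Suc N. (a(N:=c)) i * pfun r par ((vs(N:=u)) i) w)"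
  proof
    fix w
    have "(\<Sum>i<N. (a(N:=c)) i * pfun r par ((vs(N:=u)) i) w) = (\<Sum>i<N. a i * pfun r par (vs i) w)"
      by (rule sum.cong) auto
    then show "f w + c * pfun r par u w = (\<Sum>i<Suc N. (a(N:=c)) i * pfun r par ((vs(N:=u)) i) w)"
      using f by simp
  qed
  then show ?thesis unfolding Pspace_def by blast
qed

lemma P_sum: "finite U \<Longrightarrow> (\<lambda>w. \<Sum>u\<in>U. c u * pfun r par u w) \<in> Pspace r par"
proof (induction U rule: finite_induct)
  case empty then show ?case using P_zero by simp
next
  case (insert x F)
  have "(\<lambda>w. \<Sum>u\<in>insert x F. c u * pfun r par u w) = (\<lambda>w. (\<Sum>u\<in>F. c u * pfun r par u w) + c x * pfun r par x w)"
    using insert by (simp add: add.commute)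
  then show ?case using P_add1[OF insert.IH] by simp
qed

context rtree
begin

lemma L0k_ev_zero:
  assumes "\<And>v. v \<noteq> r \<Longrightarrow> B \<le> vlen r par v \<Longrightarrow> wDf k r par f v = 0"
  shows "f \<in> L0k k r par"
proof -
  let ?C = "\<Sum>w\<in>{w. vlen r par w \<le> B}. wDf k r par f w"
  have "wDf k r par f v \<le> ?C" if "v \<noteq> r" for v
  proof (cases "B \<le> vlen r par v")
    case True
    then have "wDf k r par f v = 0" using assms that by blast
    moreover have "0 \<le> ?C" by (intro sum_nonneg wDf_nonneg)
    ultimately show ?thesis by simp
  next
    case False
    then show ?thesis
      by (intro member_le_sum finite_level wDf_nonneg) auto
  qed
  then have "f \<in> Lk k r par" by (auto simp: Lk_def)
  moreover have "\<forall>v. v \<noteq> r \<and> B \<le> vlen r par v \<longrightarrow> wDf k r par f v < e" if "e > 0" for e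
    using assms that by auto
  ultimately show ?thesis by (auto simp: L0k_def)
qed

lemma P_sub: "Pspace r par \<subseteq> L0k k r par"
proof
  fix f assume "f \<in> Pspace r par"
  then obtain N :: nat and a :: "nat \<Rightarrow> complex" and vs where f: "f = (\<lambda>w. \<Sum>i<N. a i * pfun r par (vs i) w)"
    unfolding Pspace_def mem_Collect_eq by (elim exE) (rule that)
  let ?B = "Suc (\<Sum>i<N. vlen r par (vs i))"
  show "f \<in> L0k k r par"
  proof (rule L0k_ev_zero[of ?B])
    fix v assume v: "v \<noteq> r" and B: "?B \<le> vlen r par v"
    have "f v - f (par v) = (\<Sum>i<N. a i * (pfun r par (vs i) v - pfun r par (vs i) (par v)))"
      unfolding f by (simp add: sum_subtractf right_diff_distrib)
    also have "\<dots> = (\<Sum>i<N. 0)"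
    proof (rule sum.cong)
      fix i assume i: "i \<in> {..<N}"
      have "vlen r par (vs i) \<le> (\<Sum>i<N. vlen r par (vs i))"
        using i by (intro member_le_sum) auto
      then have "v \<noteq> vs i" using B by auto
      then show "a i * (pfun r par (vs i) v - pfun r par (vs i) (par v)) = 0"
        using pfun_diff[OF v] by simp
    qed simp
    finally show "wDf k r par f v = 0" by (simp add: wDf_def Df_def)
  qed
qed

lemma density:
  assumes f: "f \<in> L0k k r par" and e: "e > 0"
  shows "\<exists>p\<in>Pspace r par. normk k r par (\<lambda>w. f w - p w) < e"
proof -
  obtain N0 where N0: "\<forall>v. v \<noteq> r \<and> N0 \<le> vlen r par v \<longrightarrow> wDf k r par f v < e/2"
    using L0k_tail[OF f, of "e/2"] e by auto
  define U where "U = {u. vlen r par u \<le> N0}"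
  define c where "c u = (if u = r then f r else f u - f (par u))" for u
  define p where "p w = (\<Sum>u\<in>U. c u * pfun r par u w)" for w
  have fin: "finite U" unfolding U_def by (rule finite_level)
  have pP: "p \<in> Pspace r par" unfolding p_def[abs_def] using P_sum[OF fin] .
  have rU: "r \<in> U" by (simp add: U_def)
  have pr: "p r = f r"
  proof -
    have "p r = (\<Sum>u\<in>U. if u = r then c u else 0)"
      unfolding p_def by (rule sum.cong) (auto simp: pfun_r)
    also have "\<dots> = c r" using fin rU by simp
    finally show ?thesis by (simp add: c_def)
  qed
  have pd: "p v - p (par v) = (if v \<in> U then f v - f (par v) else 0)" if v: "v \<noteq> r" for v
  proof -
    have "p v - p (par v) = (\<Sum>u\<in>U. c u * (pfun r par u v - pfun r par u (par v)))"
      unfolding p_def by (simp add: sum_subtractf right_diff_distrib)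
    also have "\<dots> = (\<Sum>u\<in>U. if u = v then c u else 0)"
      by (rule sum.cong) (auto simp: pfun_diff[OF v])
    also have "\<dots> = (if v \<in> U then c v else 0)" using fin by simp
    finally show ?thesis using v by (simp add: c_def)
  qed
  have "wDf k r par (\<lambda>w. f w - p w) v \<le> e/2" if v: "v \<noteq> r" for v
  proof (cases "v \<in> U")
    case True
    have "f v - p v - (f (par v) - p (par v)) = (f v - f (par v)) - (p v - p (par v))"
      by (simp add: algebra_simps)
    also have "\<dots> = 0" using pd[OF v] True by simp
    finally show ?thesis using e by (simp add: wDf_def Df_def)
  next
    case False
    have "f v - p v - (f (par v) - p (par v)) = (f v - f (par v)) - (p v - p (par v))"
      by (simp add: algebra_simps)
    also have "\<dots> = f v - f (par v)" using pd[OF v] False by simp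
    finally have "wDf k r par (\<lambda>w. f w - p w) v = wDf k r par f v" by (simp add: wDf_def Df_def)
    moreover have "N0 \<le> vlen r par v" using False by (simp add: U_def)
    ultimately show ?thesis using N0 v by fastforce
  qed
  then have "S (\<lambda>w. f w - p w) \<le> e/2" by (rule S_least)
  then have "normk k r par (\<lambda>w. f w - p w) < e" using pr e by (simp add: normk_eq)
  then show ?thesis using pP by blast
qed

lemma mult_p:
  assumes f: "f \<in> L0k k r par"
  shows "(\<lambda>w. pfun r par v w * f w) \<in> L0k k r par"
proof -
  let ?g = "\<lambda>w. pfun r par v w * f w"
  have le: "wDf k r par ?g w \<le> wDf k r par f w" if w: "w \<noteq> r" "w \<noteq> v" for w
  proof -
    have eq: "pfun r par v (par w) = pfun r par v w" using pfun_diff[OF w(1), of v] w(2) by simp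
    have "?g w - ?g (par w) = pfun r par v w * (f w - f (par w))"
      using eq by (simp add: algebra_simps)
    moreover have "cmod (pfun r par v w) \<le> 1" by (simp add: pfun_def)
    ultimately have "Df r par ?g w \<le> Df r par f w"
      unfolding Df_def by (simp add: norm_mult mult_left_le_one_le)
    then show ?thesis unfolding wDf_def by (intro mult_left_mono weight_nonneg)
  qed
  obtain C where C: "\<forall>w. w \<noteq> r \<longrightarrow> wDf k r par f w \<le> C" using f by (auto simp: L0k_def Lk_def)
  have "\<forall>w. w \<noteq> r \<longrightarrow> wDf k r par ?g w \<le> C + wDf k r par ?g v"
  proof (intro allI impI)
    fix w assume w: "w \<noteq> r"
    show "wDf k r par ?g w \<le> C + wDf k r par ?g v"
    proof (cases "w = v")
      case True
      have "0 \<le> C" using C w wDf_nonneg[of f w] by force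
      then show ?thesis using True by simp
    next
      case False
      then show ?thesis using le[OF w False] C w wDf_nonneg[of ?g v] by force
    qed
  qed
  then have "?g \<in> Lk k r par" by (auto simp: Lk_def)
  moreover have "\<exists>N. \<forall>w. w \<noteq> r \<and> N \<le> vlen r par w \<longrightarrow> wDf k r par ?g w < e" if e: "e > 0" for e
  proof -
    obtain N1 where N1: "\<forall>w. w \<noteq> r \<and> N1 \<le> vlen r par w \<longrightarrow> wDf k r par f w < e"
      using L0k_tail[OF f e] by auto
    show ?thesis
    proof (intro exI[of _ "max N1 (Suc (vlen r par v))"] allI impI)
      fix w assume w: "w \<noteq> r \<and> max N1 (Suc (vlen r par v)) \<le> vlen r par w"
      then have "w \<noteq> v" by auto
      then show "wDf k r par ?g w < e" using le[of w] N1 w by fastforce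
    qed
  qed
  ultimately show ?thesis by (auto simp: L0k_def)
qed

end

context rtree
begin

lemma L0k_Lk: "f \<in> L0k k r par \<Longrightarrow> f \<in> Lk k r par"
  by (simp add: L0k_def)

lemma complete:
  assumes s: "\<forall>n. s n \<in> L0k k r par"
    and C: "\<forall>\<epsilon>>0. \<exists>M. \<forall>m\<ge>M. \<forall>n\<ge>M. normk k r par (\<lambda>w. s m w - s n w) < \<epsilon>"
  shows "\<exists>g\<in>L0k k r par. (\<lambda>n. normk k r par (\<lambda>w. s n w - g w)) \<longlonglongrightarrow> 0"
proof -
  have sd: "(\<lambda>w. s m w - s n w) \<in> Lk k r par" for m n
    using s by (intro Lk_diff L0k_Lk) auto
  have pc: "Cauchy (\<lambda>n. s n v)" for v
    unfolding Cauchy_def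
  proof (intro allI impI)
    fix e :: real assume e: "e > 0"
    have cp: "1 + real (vlen r par v) > 0" by simp
    obtain M where M: "\<forall>m\<ge>M. \<forall>n\<ge>M. normk k r par (\<lambda>w. s m w - s n w) < e / (1 + real (vlen r par v))"
      using C e cp by (meson divide_pos_pos)
    show "\<exists>M. \<forall>m\<ge>M. \<forall>n\<ge>M. dist (s m v) (s n v) < e"
    proof (intro exI[of _ M] allI impI)
      fix m n assume mn: "M \<le> m" "M \<le> n"
      have "dist (s m v) (s n v) = cmod (s m v - s n v)" by (simp add: dist_norm)
      also have "\<dots> \<le> (1 + real (vlen r par v)) * normk k r par (\<lambda>w. s m w - s n w)"
        using eval_bound2[OF sd[of m n], of v] by simp
      also have "\<dots> < (1 + real (vlen r par v)) * (e / (1 + real (vlen r par v)))"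
        using M mn cp by (intro mult_strict_left_mono) auto
      also have "\<dots> = e" using cp by simp
      finally show "dist (s m v) (s n v) < e" .
    qed
  qed
  define g where "g v = lim (\<lambda>n. s n v)" for v
  have gl: "(\<lambda>n. s n v) \<longlonglongrightarrow> g v" for v
    unfolding g_def using pc[of v] by (simp add: Cauchy_convergent_iff convergent_LIMSEQ_iff)
  have key: "cmod (s m r - g r) + wDf k r par (\<lambda>w. s m w - g w) v \<le> e"
    if e: "e > 0" and M: "\<forall>m\<ge>M. \<forall>n\<ge>M. normk k r par (\<lambda>w. s m w - s n w) < e"
      and m: "M \<le> m" and v: "v \<noteq> r" for e M m v
  proof -
    have lim: "(\<lambda>n. cmod (s m r - s n r) + wDf k r par (\<lambda>w. s m w - s n w) v)
        \<longlonglongrightarrow> cmod (s m r - g r) + wDf k r par (\<lambda>w. s m w - g w) v"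
      unfolding wDf_def Df_def by (intro tendsto_intros gl)
    have "\<forall>n\<ge>M. cmod (s m r - s n r) + wDf k r par (\<lambda>w. s m w - s n w) v \<le> e"
    proof (intro allI impI)
      fix n assume n: "M \<le> n"
      have "cmod (s m r - s n r) + wDf k r par (\<lambda>w. s m w - s n w) v \<le> normk k r par (\<lambda>w. s m w - s n w)"
        using S_upper[OF sd v] by (simp add: normk_eq)
      also have "\<dots> < e" using M m n by blast
      finally show "cmod (s m r - s n r) + wDf k r par (\<lambda>w. s m w - s n w) v \<le> e" by simp
    qed
    then show ?thesis using lim by (intro LIMSEQ_le_const2) auto
  qed
  have key2: "normk k r par (\<lambda>w. s m w - g w) \<le> e"
    if e: "e > 0" and M: "\<forall>m\<ge>M. \<forall>n\<ge>M. normk k r par (\<lambda>w. s m w - s n w) < e"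
      and m: "M \<le> m" for e M m
  proof -
    have "S (\<lambda>w. s m w - g w) \<le> e - cmod (s m r - g r)"
      using key[OF e M m] by (intro S_least) (simp add: algebra_simps)
    then show ?thesis by (simp add: normk_eq)
  qed
  have gb: "wDf k r par g v \<le> wDf k r par (s m) v + wDf k r par (\<lambda>w. s m w - g w) v" for m v
    using wDf_diff[of "s m" "\<lambda>w. s m w - g w" v] by simp
  have gLk: "g \<in> Lk k r par"
  proof -
    obtain M where M: "\<forall>m\<ge>M. \<forall>n\<ge>M. normk k r par (\<lambda>w. s m w - s n w) < 1" using C by force
    obtain D where D: "\<forall>v. v \<noteq> r \<longrightarrow> wDf k r par (s M) v \<le> D" using s[rule_format, of M] unfolding L0k_def Lk_def by blast
    have "wDf k r par g v \<le> D + 1" if v: "v \<noteq> r" for v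
    proof -
      have "cmod (s M r - g r) + wDf k r par (\<lambda>w. s M w - g w) v \<le> 1" using key[of 1 M M v] M v by simp
      then have "wDf k r par (\<lambda>w. s M w - g w) v \<le> 1" using norm_ge_zero[of "s M r - g r"] by linarith
      then show ?thesis using gb[of v M] D v by fastforce
    qed
    then show ?thesis by (auto simp: Lk_def)
  qed
  have gL0: "g \<in> L0k k r par"
  proof -
    have tl: "\<exists>N. \<forall>v. v \<noteq> r \<and> N \<le> vlen r par v \<longrightarrow> wDf k r par g v < e" if e: "e > 0" for e
    proof -
      obtain M where M: "\<forall>m\<ge>M. \<forall>n\<ge>M. normk k r par (\<lambda>w. s m w - s n w) < e/2" using C e by (meson half_gt_zero)
      obtain N where N: "\<forall>v. v \<noteq> r \<and> N \<le> vlen r par v \<longrightarrow> wDf k r par (s M) v < e/2"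
        using L0k_tail[of "s M" "e/2"] s e by auto
      show ?thesis
      proof (intro exI[of _ N] allI impI)
        fix v assume v: "v \<noteq> r \<and> N \<le> vlen r par v"
        have "cmod (s M r - g r) + wDf k r par (\<lambda>w. s M w - g w) v \<le> e/2"
          using key[of "e/2" M M v] M v e by simp
        then have "wDf k r par (\<lambda>w. s M w - g w) v \<le> e/2" using norm_ge_zero[of "s M r - g r"] by linarith
        then show "wDf k r par g v < e" using gb[of v M] N v by fastforce
      qed
    qed
    show ?thesis unfolding L0k_def using gLk tl by blast
  qed
  have "(\<lambda>n. normk k r par (\<lambda>w. s n w - g w)) \<longlonglongrightarrow> 0"
    unfolding LIMSEQ_iff
  proof (intro allI impI)
    fix e :: real assume e: "e > 0"
    obtain M where M: "\<forall>m\<ge>M. \<forall>n\<ge>M. normk k r par (\<lambda>w. s m w - s n w) < e/2" using C e by (meson half_gt_zero)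
    show "\<exists>no. \<forall>n\<ge>no. norm (normk k r par (\<lambda>w. s n w - g w) - 0) < e"
    proof (intro exI[of _ M] allI impI)
      fix n assume n: "M \<le> n"
      have a: "normk k r par (\<lambda>w. s n w - g w) \<le> e/2" using key2[of "e/2" M n] M n e by simp
      have b: "0 \<le> normk k r par (\<lambda>w. s n w - g w)"
        using s gL0 by (intro normk_nonneg Lk_diff L0k_Lk) auto
      show "norm (normk k r par (\<lambda>w. s n w - g w) - 0) < e" using a b e by simp
    qed
  qed
  then show ?thesis using gL0 by blast
qed

lemma S_scale: "f \<in> L0k k r par \<Longrightarrow> S (\<lambda>w. c * f w) = cmod c * S f"
proof -
  assume f: "f \<in> L0k k r par"
  have cf: "(\<lambda>w. c * f w) \<in> Lk k r par" using L0k_scale[OF f] by (rule L0k_Lk)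
  have fl: "f \<in> Lk k r par" using f by (rule L0k_Lk)
  have le: "S (\<lambda>w. c * f w) \<le> cmod c * S f"
    by (rule S_least) (simp add: wDf_scale mult_left_mono S_upper[OF fl])
  have ge: "cmod c * S f \<le> S (\<lambda>w. c * f w)"
  proof (cases "c = 0")
    case True then show ?thesis using S_nonneg[OF cf] by simp
  next
    case False
    then have cp: "cmod c > 0" by simp
    have "S f \<le> S (\<lambda>w. c * f w) / cmod c"
    proof (rule S_least)
      fix v assume v: "v \<noteq> r"
      have "wDf k r par f v = wDf k r par (\<lambda>w. c * f w) v / cmod c" using cp by (simp add: wDf_scale)
      also have "\<dots> \<le> S (\<lambda>w. c * f w) / cmod c" using S_upper[OF cf v] cp by (simp add: divide_right_mono)
      finally show "wDf k r par f v \<le> S (\<lambda>w. c * f w) / cmod c" .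
    qed
    then show ?thesis using cp by (simp add: field_simps)
  qed
  show ?thesis using le ge by simp
qed

end

theorem lemma5p4:
  fixes r :: 'v and par :: "'v \<Rightarrow> 'v" and k :: nat
  assumes "rooted_tree r par"
  shows "functional_banach (L0k k r par) (normk k r par)
       \<and> Pspace r par \<subseteq> L0k k r par
       \<and> (\<forall>f\<in>L0k k r par. \<forall>\<epsilon>>0. \<exists>p\<in>Pspace r par. normk k r par (\<lambda>w. f w - p w) < \<epsilon>)
       \<and> (\<forall>v. \<forall>f\<in>L0k k r par. (\<lambda>w. pfun r par v w * f w) \<in> L0k k r par)"
proof -
  interpret rtree r par k by unfold_locales (rule assms)
  have fb: "functional_banach (L0k k r par) (normk k r par)"
    unfolding functional_banach_def
  proof (intro conjI ballI allI impI)
    show "(\<lambda>_. 0) \<in> L0k k r par" by (rule L0k_zero)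
  next
    fix f g assume "f \<in> L0k k r par" "g \<in> L0k k r par"
    then show "(\<lambda>w. f w + g w) \<in> L0k k r par" by (rule L0k_add)
  next
    fix c f assume "f \<in> L0k k r par"
    then show "(\<lambda>w. c * f w) \<in> L0k k r par" by (rule L0k_scale)
  next
    fix f assume "f \<in> L0k k r par"
    then show "0 \<le> normk k r par f" by (intro normk_nonneg L0k_Lk)
  next
    fix f assume f: "f \<in> L0k k r par"
    show "(normk k r par f = 0) = (f = (\<lambda>_. 0))"
    proof
      assume "normk k r par f = 0"
      then show "f = (\<lambda>_. 0)" using norm_zero L0k_Lk[OF f] by blast
    next
      assume f0: "f = (\<lambda>_. 0)"
      have z: "(\<lambda>_. 0::complex) \<in> Lk k r par" using L0k_zero by (rule L0k_Lk)
      have "S (\<lambda>_. 0) \<le> 0" by (rule S_least) (simp add: wDf_def Df_def)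
      then show "normk k r par f = 0" using S_nonneg[OF z] f0 by (simp add: normk_eq)
    qed
  next
    fix c f assume f: "f \<in> L0k k r par"
    show "normk k r par (\<lambda>w. c * f w) = cmod c * normk k r par f"
      using S_scale[OF f, of c] by (simp add: normk_eq norm_mult algebra_simps)
  next
    fix f g assume f: "f \<in> L0k k r par" and g: "g \<in> L0k k r par"
    have fl: "f \<in> Lk k r par" and gl: "g \<in> Lk k r par" using f g by (auto intro: L0k_Lk)
    have "S (\<lambda>w. f w + g w) \<le> S f + S g"
    proof (rule S_least)
      fix v assume v: "v \<noteq> r"
      show "wDf k r par (\<lambda>w. f w + g w) v \<le> S f + S g"
        using wDf_add[of f g v] S_upper[OF fl v] S_upper[OF gl v] by linarith
    qed
    moreover have "cmod (f r + g r) \<le> cmod (f r) + cmod (g r)" by (rule norm_triangle_ineq)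
    ultimately show "normk k r par (\<lambda>w. f w + g w) \<le> normk k r par f + normk k r par g"
      by (simp add: normk_eq)
  next
    fix s :: "nat \<Rightarrow> 'v \<Rightarrow> complex"
    assume "\<forall>n. s n \<in> L0k k r par"
      "\<forall>\<epsilon>>0. \<exists>M. \<forall>m\<ge>M. \<forall>n\<ge>M. normk k r par (\<lambda>w. s m w - s n w) < \<epsilon>"
    then show "\<exists>g\<in>L0k k r par. (\<lambda>n. normk k r par (\<lambda>w. s n w - g w)) \<longlonglongrightarrow> 0"
      by (rule complete)
  next
    fix v
    show "\<exists>C. \<forall>f\<in>L0k k r par. cmod (f v) \<le> C * normk k r par f"
      using eval_bound2 L0k_Lk by blast
  qed
  show ?thesis using fb P_sub density mult_p by blast
qed

end
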